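(* Let $\vec{A}\in\mathcal{G}^{p,q}$, let $(\vec{B}_1,\dots,\vec{B}_d)$ be an ordered tuple of mutually coorthogonal blades with $\vec B_k^2\in\mathbb{R}\setminus\{0\}$, and let $\vec{j}\in\{0,1\}^d$. Then $\vec{A}_{\vec c^{\vec{j}}(\overrightarrow{\vec B_1,\dots,\vec B_d})}=\vec{A}_{\vec c^{\vec{j}}(\overleftarrow{\vec B_1,\dots,\vec B_d})}$.
   Context: $\mathcal{G}^{p,q}$ is the real geometric algebra of $\mathbb{R}^{p,q}$. Blades are coorthogonal if $\vec A\vec B=\pm\vec B\vec A$. For invertible $\vec B$: $\vec{A}_{\vec c^0(\vec{B})}=\frac12(\vec{A}+\vec{B}^{-1}\vec{A}\vec{B})$, $\vec{A}_{\vec c^1(\vec{B})}=\frac12(\vec{A}-\vec{B}^{-1}\vec{A}\vec{B})$; $\vec{A}_{\vec c^{\vec{j}}(\overrightarrow{\vec B_1,\dots,\vec B_d})}=((\vec{A}_{\vec c^{j_1}(\vec{B}_1)})_{\vec c^{j_2}(\vec{B}_2)}\cdots)_{\vec c^{j_d}(\vec{B}_d)}$ and $\vec{A}_{\vec c^{\vec{j}}(\overleftarrow{\vec B_1,\dots,\vec B_d})}=((\vec{A}_{\vec c^{j_d}(\vec{B}_d)})_{\vec c^{j_{d-1}}(\vec{B}_{d-1})}\cdots)_{\vec c^{j_1}(\vec{B}_1)}$. *)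

theory Defs
  imports Complex_Main
begin

text \<open>Concrete model of the real geometric algebra G^{p,q} of R^{p,q}.
  Orthonormal basis e_0,...,e_{p+q-1} with e_i^2 = 1 for i < p and e_i^2 = -1 for
  p <= i < p+q.  A multivector is a coefficient function on index sets S (the basis
  blade e_S = product of the e_i, i in S, in increasing order).\<close>

type_synonym mvec = "nat set \<Rightarrow> real"

definition mv :: "nat \<Rightarrow> nat \<Rightarrow> mvec \<Rightarrow> bool" where
  "mv p q A \<longleftrightarrow> (\<forall>S. A S \<noteq> 0 \<longrightarrow> S \<subseteq> {..<p+q})"

definition metric :: "nat \<Rightarrow> nat \<Rightarrow> real" where
  "metric p i = (if i < p then 1 else -1)"

text \<open>Sign / metric factor in  e_T e_U = bsign p T U * e_(T symdiff U).\<close>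
definition bsign :: "nat \<Rightarrow> nat set \<Rightarrow> nat set \<Rightarrow> real" where
  "bsign p T U = (-1) ^ card {(t,u). t \<in> T \<and> u \<in> U \<and> u < t} * (\<Prod>i\<in>T \<inter> U. metric p i)"

definition symdiff :: "nat set \<Rightarrow> nat set \<Rightarrow> nat set" where
  "symdiff T U = (T - U) \<union> (U - T)"

definition gp :: "nat \<Rightarrow> nat \<Rightarrow> mvec \<Rightarrow> mvec \<Rightarrow> mvec" where
  "gp p q A B = (\<lambda>S. \<Sum>T\<in>Pow {..<p+q}. \<Sum>U\<in>Pow {..<p+q}.
      (if symdiff T U = S then bsign p T U * A T * B U else 0))"

definition op :: "nat \<Rightarrow> nat \<Rightarrow> mvec \<Rightarrow> mvec \<Rightarrow> mvec" where
  "op p q A B = (\<lambda>S. \<Sum>T\<in>Pow {..<p+q}. \<Sum>U\<in>Pow {..<p+q}.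
      (if T \<inter> U = {} \<and> T \<union> U = S then bsign p T U * A T * B U else 0))"

definition scal :: "real \<Rightarrow> mvec" where
  "scal r = (\<lambda>S. if S = {} then r else 0)"

definition mv_add :: "mvec \<Rightarrow> mvec \<Rightarrow> mvec" where
  "mv_add A B = (\<lambda>S. A S + B S)"

definition mv_sub :: "mvec \<Rightarrow> mvec \<Rightarrow> mvec" where
  "mv_sub A B = (\<lambda>S. A S - B S)"

definition smul :: "real \<Rightarrow> mvec \<Rightarrow> mvec" where
  "smul r A = (\<lambda>S. r * A S)"

definition is_vector :: "nat \<Rightarrow> nat \<Rightarrow> mvec \<Rightarrow> bool" where
  "is_vector p q v \<longleftrightarrow> mv p q v \<and> (\<forall>S. v S \<noteq> 0 \<longrightarrow> card S = 1)"

text \<open>Blade: a scalar multiple of an outer product of vectors (the empty outer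
  product is the scalar 1, so scalars are 0-blades).\<close>
definition is_blade :: "nat \<Rightarrow> nat \<Rightarrow> mvec \<Rightarrow> bool" where
  "is_blade p q B \<longleftrightarrow> (\<exists>r vs. (\<forall>v\<in>set vs. is_vector p q v) \<and>
      B = smul r (foldr (op p q) vs (scal 1)))"

definition coorthogonal :: "nat \<Rightarrow> nat \<Rightarrow> mvec \<Rightarrow> mvec \<Rightarrow> bool" where
  "coorthogonal p q A B \<longleftrightarrow> gp p q A B = gp p q B A \<or> gp p q A B = smul (-1) (gp p q B A)"

definition invertible :: "nat \<Rightarrow> nat \<Rightarrow> mvec \<Rightarrow> bool" where
  "invertible p q B \<longleftrightarrow> (\<exists>C. mv p q C \<and> gp p q B C = scal 1 \<and> gp p q C B = scal 1)"

definition ga_inv :: "nat \<Rightarrow> nat \<Rightarrow> mvec \<Rightarrow> mvec" where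
  "ga_inv p q B = (THE C. mv p q C \<and> gp p q B C = scal 1 \<and> gp p q C B = scal 1)"

definition cproj :: "nat \<Rightarrow> nat \<Rightarrow> nat \<Rightarrow> mvec \<Rightarrow> mvec \<Rightarrow> mvec" where
  "cproj p q j B A =
     (let C = gp p q (gp p q (ga_inv p q B) A) B in
      if j = 0 then smul (1/2) (mv_add A C) else smul (1/2) (mv_sub A C))"

definition cproj_fwd :: "nat \<Rightarrow> nat \<Rightarrow> nat list \<Rightarrow> mvec list \<Rightarrow> mvec \<Rightarrow> mvec" where
  "cproj_fwd p q js Bs A = foldl (\<lambda>X (B, j). cproj p q j B X) A (zip Bs js)"

definition cproj_bwd :: "nat \<Rightarrow> nat \<Rightarrow> nat list \<Rightarrow> mvec list \<Rightarrow> mvec \<Rightarrow> mvec" where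
  "cproj_bwd p q js Bs A = foldr (\<lambda>(B, j) X. cproj p q j B X) (zip Bs js) A"

end

theory Submission
  imports Defs
begin


definition ninv :: "nat set \<Rightarrow> nat set \<Rightarrow> nat" where
  "ninv T U = card {(t,u). t \<in> T \<and> u \<in> U \<and> u < t}"

lemma bsign_alt: "bsign p T U = (-1) ^ ninv T U * (\<Prod>i\<in>T \<inter> U. metric p i)"
  by (simp add: bsign_def ninv_def)

lemma ninv_un1:
  assumes "finite X" "finite Y" "finite V" "X \<inter> Y = {}"
  shows "ninv (X \<union> Y) V = ninv X V + ninv Y V"
proof -
  have e: "{(t,u). t \<in> X \<union> Y \<and> u \<in> V \<and> u < t} =
    {(t,u). t \<in> X \<and> u \<in> V \<and> u < t} \<union> {(t,u). t \<in> Y \<and> u \<in> V \<and> u < t}" by auto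
  have f1: "finite {(t,u). t \<in> X \<and> u \<in> V \<and> u < t}"
    by (rule finite_subset[of _ "X \<times> V"]) (use assms in auto)
  have f2: "finite {(t,u). t \<in> Y \<and> u \<in> V \<and> u < t}"
    by (rule finite_subset[of _ "Y \<times> V"]) (use assms in auto)
  show ?thesis unfolding ninv_def e
    by (rule card_Un_disjoint[OF f1 f2]) (use assms in auto)
qed

lemma ninv_un2:
  assumes "finite X" "finite Y" "finite V" "X \<inter> Y = {}"
  shows "ninv V (X \<union> Y) = ninv V X + ninv V Y"
proof -
  have e: "{(t,u). t \<in> V \<and> u \<in> X \<union> Y \<and> u < t} =
    {(t,u). t \<in> V \<and> u \<in> X \<and> u < t} \<union> {(t,u). t \<in> V \<and> u \<in> Y \<and> u < t}" by auto
  have f1: "finite {(t,u). t \<in> V \<and> u \<in> X \<and> u < t}"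
    by (rule finite_subset[of _ "V \<times> X"]) (use assms in auto)
  have f2: "finite {(t,u). t \<in> V \<and> u \<in> Y \<and> u < t}"
    by (rule finite_subset[of _ "V \<times> Y"]) (use assms in auto)
  show ?thesis unfolding ninv_def e
    by (rule card_Un_disjoint[OF f1 f2]) (use assms in auto)
qed

lemma ninv_sd1:
  assumes "finite T" "finite U" "finite V"
  shows "ninv (symdiff T U) V + 2 * ninv (T \<inter> U) V = ninv T V + ninv U V"
proof -
  have a: "ninv T V = ninv (T - U) V + ninv (T \<inter> U) V"
    using ninv_un1[of "T - U" "T \<inter> U" V] assms by (auto simp: Un_Diff_Int)
  have b: "ninv U V = ninv (U - T) V + ninv (T \<inter> U) V"
    proof -
      have "U = (U - T) \<union> (T \<inter> U)" by auto
      then show ?thesis using ninv_un1[of "U - T" "T \<inter> U" V] assms by (metis Diff_disjoint Int_Diff_disjoint Int_commute finite_Diff finite_Int)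
    qed
  have c: "ninv (symdiff T U) V = ninv (T - U) V + ninv (U - T) V"
    unfolding symdiff_def using ninv_un1[of "T - U" "U - T" V] assms by auto
  show ?thesis using a b c by simp
qed

lemma ninv_sd2:
  assumes "finite T" "finite U" "finite V"
  shows "ninv T (symdiff U V) + 2 * ninv T (U \<inter> V) = ninv T U + ninv T V"
proof -
  have a: "ninv T U = ninv T (U - V) + ninv T (U \<inter> V)"
    using ninv_un2[of "U - V" "U \<inter> V" T] assms by (auto simp: Un_Diff_Int)
  have b: "ninv T V = ninv T (V - U) + ninv T (U \<inter> V)"
    proof -
      have "V = (V - U) \<union> (U \<inter> V)" by auto
      then show ?thesis using ninv_un2[of "V - U" "U \<inter> V" T] assms by (metis Diff_disjoint Int_Diff_disjoint Int_commute finite_Diff finite_Int)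
    qed
  have c: "ninv T (symdiff U V) = ninv T (U - V) + ninv T (V - U)"
    unfolding symdiff_def using ninv_un2[of "U - V" "V - U" T] assms by auto
  show ?thesis using a b c by simp
qed

lemma neg1_pow_par: "(a::nat) + 2 * x = b + 2 * y \<Longrightarrow> ((-1::real) ^ a) = (-1) ^ b"
proof -
  assume h: "a + 2 * x = b + 2 * y"
  have "((-1::real) ^ a) = (-1) ^ (a + 2 * x)" by (simp add: power_add power_mult)
  also have "\<dots> = (-1) ^ (b + 2*y)" using h by simp
  also have "\<dots> = (-1) ^ b" by (simp add: power_add power_mult)
  finally show ?thesis .
qed

lemma bsign_cocycle:
  assumes "finite T" "finite U" "finite V"
  shows "bsign p T U * bsign p (symdiff T U) V = bsign p U V * bsign p T (symdiff U V)"
proof -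
  have s: "(-1::real) ^ (ninv T U + ninv (symdiff T U) V) = (-1) ^ (ninv U V + ninv T (symdiff U V))"
    apply (rule neg1_pow_par[of _ "ninv (T \<inter> U) V" _ "ninv T (U \<inter> V)"])
    using ninv_sd1[OF assms] ninv_sd2[OF assms] by linarith
  have m1: "(\<Prod>i\<in>T \<inter> U. metric p i) * (\<Prod>i\<in>symdiff T U \<inter> V. metric p i)
      = (\<Prod>i\<in>(T \<inter> U) \<union> (symdiff T U \<inter> V). metric p i)"
    by (rule prod.union_disjoint[symmetric]) (use assms in \<open>auto simp: symdiff_def\<close>)
  have m2: "(\<Prod>i\<in>U \<inter> V. metric p i) * (\<Prod>i\<in>T \<inter> symdiff U V. metric p i)
      = (\<Prod>i\<in>(U \<inter> V) \<union> (T \<inter> symdiff U V). metric p i)"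
    by (rule prod.union_disjoint[symmetric]) (use assms in \<open>auto simp: symdiff_def\<close>)
  have se: "(T \<inter> U) \<union> (symdiff T U \<inter> V) = (U \<inter> V) \<union> (T \<inter> symdiff U V)"
    by (auto simp: symdiff_def)
  have "bsign p T U * bsign p (symdiff T U) V =
     (-1::real) ^ (ninv T U + ninv (symdiff T U) V) * ((\<Prod>i\<in>T \<inter> U. metric p i) * (\<Prod>i\<in>symdiff T U \<inter> V. metric p i))"
    by (simp add: bsign_alt power_add)
  also have "\<dots> = (-1::real) ^ (ninv U V + ninv T (symdiff U V)) * ((\<Prod>i\<in>U \<inter> V. metric p i) * (\<Prod>i\<in>T \<inter> symdiff U V. metric p i))"
    using s m1 m2 se by simp
  also have "\<dots> = bsign p U V * bsign p T (symdiff U V)"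
    by (simp add: bsign_alt power_add)
  finally show ?thesis .
qed

lemma symdiff_assoc: "symdiff (symdiff T U) V = symdiff T (symdiff U V)"
  by (auto simp: symdiff_def)

lemma symdiff_sub: "T \<subseteq> R \<Longrightarrow> U \<subseteq> R \<Longrightarrow> symdiff T U \<subseteq> R"
  by (auto simp: symdiff_def)



lemma pull: "(if P then a * (\<Sum>x\<in>A. \<Sum>y\<in>B. f x y) * c else 0) = (\<Sum>x\<in>A. \<Sum>y\<in>B. if P then a * f x y * c else (0::real))"
  by (cases P) (simp_all add: sum_distrib_left sum_distrib_right)

lemma pull2: "(if P then a * (\<Sum>x\<in>A. \<Sum>y\<in>B. f x y) else 0) = (\<Sum>x\<in>A. \<Sum>y\<in>B. if P then a * f x y else (0::real))"
  by (cases P) (simp_all add: sum_distrib_left sum_distrib_right)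

lemma gp_assoc: "gp p q (gp p q A B) C = gp p q A (gp p q B C)"
proof (rule ext)
  fix S
  let ?R = "Pow {..<p+q}"
  have fin: "finite ?R" by simp
  define F where "F T U V = (if symdiff (symdiff T U) V = S then bsign p (symdiff T U) V * bsign p T U * A T * B U * C V else 0)" for T U V
  define G where "G T U V = (if symdiff T (symdiff U V) = S then bsign p T (symdiff U V) * bsign p U V * A T * B U * C V else 0)" for T U V
  have FG: "T \<in> ?R \<Longrightarrow> U \<in> ?R \<Longrightarrow> V \<in> ?R \<Longrightarrow> F T U V = G T U V" for T U V
    unfolding F_def G_def using bsign_cocycle[of T U V p] symdiff_assoc[of T U V]
    by (auto simp: finite_subset algebra_simps)
  define h where "h X V T U = (if symdiff T U = X then (if symdiff X V = S then bsign p X V * bsign p T U * A T * B U * C V else 0) else 0)" for X V T U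
  have "gp p q (gp p q A B) C S = (\<Sum>X\<in>?R. \<Sum>V\<in>?R. \<Sum>T\<in>?R. \<Sum>U\<in>?R. h X V T U)"
    unfolding gp_def h_def
    apply (intro sum.cong refl)
    apply (subst pull)
    apply (intro sum.cong refl)
    apply auto
    done
  also have "\<dots> = (\<Sum>V\<in>?R. \<Sum>X\<in>?R. \<Sum>T\<in>?R. \<Sum>U\<in>?R. h X V T U)" by (rule sum.swap)
  also have "\<dots> = (\<Sum>V\<in>?R. \<Sum>T\<in>?R. \<Sum>X\<in>?R. \<Sum>U\<in>?R. h X V T U)"
    by (rule sum.cong[OF refl], rule sum.swap)
  also have "\<dots> = (\<Sum>V\<in>?R. \<Sum>T\<in>?R. \<Sum>U\<in>?R. \<Sum>X\<in>?R. h X V T U)"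
    by (rule sum.cong[OF refl], rule sum.cong[OF refl], rule sum.swap)
  also have "\<dots> = (\<Sum>V\<in>?R. \<Sum>T\<in>?R. \<Sum>U\<in>?R. F T U V)"
    unfolding h_def F_def
    by (intro sum.cong refl) (auto simp: sum.delta' symdiff_sub)
  also have "\<dots> = (\<Sum>T\<in>?R. \<Sum>V\<in>?R. \<Sum>U\<in>?R. F T U V)" by (rule sum.swap)
  also have "\<dots> = (\<Sum>T\<in>?R. \<Sum>U\<in>?R. \<Sum>V\<in>?R. F T U V)"
    by (rule sum.cong[OF refl], rule sum.swap)
  also have "\<dots> = (\<Sum>T\<in>?R. \<Sum>U\<in>?R. \<Sum>V\<in>?R. G T U V)"
    by (intro sum.cong refl FG)
  finally have L: "gp p q (gp p q A B) C S = (\<Sum>T\<in>?R. \<Sum>U\<in>?R. \<Sum>V\<in>?R. G T U V)" .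
  define k where "k T Y U V = (if symdiff U V = Y then (if symdiff T Y = S then bsign p T Y * bsign p U V * A T * B U * C V else 0) else 0)" for T Y U V
  have "gp p q A (gp p q B C) S = (\<Sum>T\<in>?R. \<Sum>Y\<in>?R. \<Sum>U\<in>?R. \<Sum>V\<in>?R. k T Y U V)"
    unfolding gp_def k_def
    apply (intro sum.cong refl)
    apply (subst pull2)
    apply (intro sum.cong refl)
    apply auto
    done
  also have "\<dots> = (\<Sum>T\<in>?R. \<Sum>U\<in>?R. \<Sum>Y\<in>?R. \<Sum>V\<in>?R. k T Y U V)"
    by (rule sum.cong[OF refl], rule sum.swap)
  also have "\<dots> = (\<Sum>T\<in>?R. \<Sum>U\<in>?R. \<Sum>V\<in>?R. \<Sum>Y\<in>?R. k T Y U V)"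
    by (rule sum.cong[OF refl], rule sum.cong[OF refl], rule sum.swap)
  also have "\<dots> = (\<Sum>T\<in>?R. \<Sum>U\<in>?R. \<Sum>V\<in>?R. G T U V)"
    unfolding k_def G_def
    by (intro sum.cong refl) (auto simp: sum.delta' symdiff_sub)
  finally show "gp p q (gp p q A B) C S = gp p q A (gp p q B C) S" using L by simp
qed



lemma gp_mv: "mv p q (gp p q A B)"
  unfolding mv_def
proof (intro allI impI)
  fix S assume h: "gp p q A B S \<noteq> 0"
  show "S \<subseteq> {..<p+q}"
  proof (rule ccontr)
    assume n: "\<not> S \<subseteq> {..<p+q}"
    have ne: "T \<subseteq> {..<p+q} \<Longrightarrow> U \<subseteq> {..<p+q} \<Longrightarrow> symdiff T U \<noteq> S" for T U
      using n symdiff_sub[of T "{..<p+q}" U] by blast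
    have "gp p q A B S = 0" unfolding gp_def
      by (rule sum.neutral, rule ballI, rule sum.neutral) (simp add: ne)
    with h show False by simp
  qed
qed

lemma op_mv: "mv p q (op p q A B)"
  unfolding mv_def
proof (intro allI impI)
  fix S assume h: "op p q A B S \<noteq> 0"
  show "S \<subseteq> {..<p+q}"
  proof (rule ccontr)
    assume n: "\<not> S \<subseteq> {..<p+q}"
    have ne: "T \<subseteq> {..<p+q} \<Longrightarrow> U \<subseteq> {..<p+q} \<Longrightarrow> T \<union> U \<noteq> S" for T U
      using n by blast
    have "op p q A B S = 0" unfolding op_def
      by (rule sum.neutral, rule ballI, rule sum.neutral) (simp add: ne)
    with h show False by simp
  qed
qed



lemma blade_mv: "is_blade p q B \<Longrightarrow> mv p q B"
  unfolding is_blade_def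
proof (elim exE conjE)
  fix r vs assume "B = smul r (foldr (op p q) vs (scal 1))"
  moreover have "mv p q (foldr (op p q) vs (scal 1))"
    by (cases vs) (simp_all add: op_mv, simp add: mv_def scal_def)
  ultimately show "mv p q B" by (simp add: mv_def smul_def)
qed

lemma bsign_empty1: "bsign p {} U = 1" by (simp add: bsign_def)
lemma bsign_empty2: "bsign p T {} = 1" by (simp add: bsign_def)

lemma gp_one_left: assumes "mv p q X" shows "gp p q (scal 1) X = X"
proof (rule ext)
  fix S
  have t: "(if symdiff T U = S then bsign p T U * scal 1 T * X U else 0) = (if T = {} then (if U = S then X U else 0) else 0)" for T U
    by (simp add: scal_def symdiff_def bsign_empty1)
  have "gp p q (scal 1) X S = (\<Sum>T\<in>Pow {..<p+q}. if T = {} then (\<Sum>U\<in>Pow {..<p+q}. if U = S then X U else 0) else 0)"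
    unfolding gp_def t apply (intro sum.cong refl)
    subgoal for T by (cases "T = {}") simp_all
    done
  also have "\<dots> = X S" using assms by (auto simp: sum.delta mv_def)
  finally show "gp p q (scal 1) X S = X S" .
qed

lemma gp_one_right: assumes "mv p q X" shows "gp p q X (scal 1) = X"
proof (rule ext)
  fix S
  have t: "(if symdiff T U = S then bsign p T U * X T * scal 1 U else 0) = (if U = {} then (if T = S then X T else 0) else 0)" for T U
    by (simp add: scal_def symdiff_def bsign_empty2)
  have "gp p q X (scal 1) S = (\<Sum>T\<in>Pow {..<p+q}. if T = S then X T else 0)"
    unfolding gp_def t by (simp add: sum.delta)
  also have "\<dots> = X S" using assms by (auto simp: sum.delta mv_def)
  finally show "gp p q X (scal 1) S = X S" .
qed

lemma if_add0: "(if P then x else 0) + (if P then y else 0) = (if P then x + y else (0::real))" by simp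
lemma if_sub0: "(if P then x else 0) - (if P then y else 0) = (if P then x - y else (0::real))" by simp
lemma if_mul0: "r * (if P then x else 0) = (if P then r * x else (0::real))" by simp

lemma gp_smul_left: "gp p q (smul r A) B = smul r (gp p q A B)"
  unfolding gp_def smul_def
  apply (rule ext)
  apply (simp only: sum_distrib_left if_mul0 sum.distrib[symmetric] if_add0 sum_subtractf[symmetric] if_sub0)
  apply (intro sum.cong refl)
  apply (simp add: algebra_simps)
  done

lemma gp_smul_right: "gp p q A (smul r B) = smul r (gp p q A B)"
  unfolding gp_def smul_def
  apply (rule ext)
  apply (simp only: sum_distrib_left if_mul0 sum.distrib[symmetric] if_add0 sum_subtractf[symmetric] if_sub0)
  apply (intro sum.cong refl)
  apply (simp add: algebra_simps)
  done

lemma gp_add_right: "gp p q A (mv_add B B') = mv_add (gp p q A B) (gp p q A B')"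
  unfolding gp_def mv_add_def
  apply (rule ext)
  apply (simp only: sum_distrib_left if_mul0 sum.distrib[symmetric] if_add0 sum_subtractf[symmetric] if_sub0)
  apply (intro sum.cong refl)
  apply (simp add: algebra_simps)
  done

lemma gp_add_left: "gp p q (mv_add B B') A = mv_add (gp p q B A) (gp p q B' A)"
  unfolding gp_def mv_add_def
  apply (rule ext)
  apply (simp only: sum_distrib_left if_mul0 sum.distrib[symmetric] if_add0 sum_subtractf[symmetric] if_sub0)
  apply (intro sum.cong refl)
  apply (simp add: algebra_simps)
  done

lemma gp_sub_right: "gp p q A (mv_sub B B') = mv_sub (gp p q A B) (gp p q A B')"
  unfolding gp_def mv_sub_def
  apply (rule ext)
  apply (simp only: sum_distrib_left if_mul0 sum.distrib[symmetric] if_add0 sum_subtractf[symmetric] if_sub0)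
  apply (intro sum.cong refl)
  apply (simp add: algebra_simps)
  done

lemma gp_sub_left: "gp p q (mv_sub B B') A = mv_sub (gp p q B A) (gp p q B' A)"
  unfolding gp_def mv_sub_def
  apply (rule ext)
  apply (simp only: sum_distrib_left if_mul0 sum.distrib[symmetric] if_add0 sum_subtractf[symmetric] if_sub0)
  apply (intro sum.cong refl)
  apply (simp add: algebra_simps)
  done



lemma ga_inv_eq:
  assumes "mv p q B" "c \<noteq> 0" "gp p q B B = scal c"
  shows "ga_inv p q B = smul (1/c) B"
  unfolding ga_inv_def
proof (rule the_equality)
  have i1: "gp p q B (smul (1/c) B) = scal 1" and i2: "gp p q (smul (1/c) B) B = scal 1"
  proof -
    have sc: "smul (1/c) (scal c) = scal 1" using assms(2) by (simp add: smul_def scal_def fun_eq_iff)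
    show "gp p q B (smul (1/c) B) = scal 1" by (simp add: gp_smul_right assms(3) sc)
    show "gp p q (smul (1/c) B) B = scal 1" by (simp add: gp_smul_left assms(3) sc)
  qed
  have m: "mv p q (smul (1/c) B)" using assms(1) by (auto simp: mv_def smul_def)
  show "mv p q (smul (1/c) B) \<and> gp p q B (smul (1/c) B) = scal 1 \<and> gp p q (smul (1/c) B) B = scal 1"
    using i1 i2 m by simp
  fix C assume h: "mv p q C \<and> gp p q B C = scal 1 \<and> gp p q C B = scal 1"
  have "C = gp p q C (scal 1)" using h gp_one_right by simp
  also have "\<dots> = gp p q C (gp p q B (smul (1/c) B))" using i1 by simp
  also have "\<dots> = gp p q (gp p q C B) (smul (1/c) B)" by (simp add: gp_assoc)
  also have "\<dots> = smul (1/c) B" using h gp_one_left m by simp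
  finally show "C = smul (1/c) B" .
qed

definition K :: "nat \<Rightarrow> nat \<Rightarrow> mvec \<Rightarrow> mvec \<Rightarrow> mvec" where
  "K p q B X = gp p q (gp p q (ga_inv p q B) X) B"

lemma K_add: "K p q B (mv_add X Y) = mv_add (K p q B X) (K p q B Y)"
  by (simp add: K_def gp_add_left gp_add_right)
lemma K_sub: "K p q B (mv_sub X Y) = mv_sub (K p q B X) (K p q B Y)"
  by (simp add: K_def gp_sub_left gp_sub_right)
lemma K_smul: "K p q B (smul r X) = smul r (K p q B X)"
  by (simp add: K_def gp_smul_left gp_smul_right)

lemma cproj_K: "cproj p q j B X = (if j = 0 then smul (1/2) (mv_add X (K p q B X)) else smul (1/2) (mv_sub X (K p q B X)))"
  by (simp add: cproj_def K_def Let_def)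

lemma cproj_comm:
  assumes "\<And>X. K p q B1 (K p q B2 X) = K p q B2 (K p q B1 X)"
  shows "cproj p q j1 B1 (cproj p q j2 B2 Y) = cproj p q j2 B2 (cproj p q j1 B1 Y)"
proof -
  have e: "\<And>S. K p q B1 (K p q B2 Y) S = K p q B2 (K p q B1 Y) S" using assms by simp
  show ?thesis
    unfolding cproj_K
    by (simp only: K_add K_sub K_smul split: if_split)
       (simp add: fun_eq_iff smul_def mv_add_def mv_sub_def e algebra_simps)
qed

lemma smul_smul: "smul a (smul b Y) = smul (a*b) Y" by (simp add: smul_def fun_eq_iff)

lemma K_form:
  assumes "mv p q B" "c \<noteq> 0" "gp p q B B = scal c"
  shows "K p q B X = smul (1/c) (gp p q (gp p q B X) B)"
  using ga_inv_eq[OF assms] by (simp add: K_def gp_smul_left)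

lemma K_comm:
  assumes m1: "mv p q B1" and c1: "c1 \<noteq> 0" "gp p q B1 B1 = scal c1"
    and m2: "mv p q B2" and c2: "c2 \<noteq> 0" "gp p q B2 B2 = scal c2"
    and co: "coorthogonal p q B1 B2"
  shows "K p q B1 (K p q B2 X) = K p q B2 (K p q B1 X)"
proof -
  have key: "gp p q (gp p q (gp p q B1 B2) X) (gp p q B2 B1) = gp p q (gp p q (gp p q B2 B1) X) (gp p q B1 B2)"
    using co unfolding coorthogonal_def
  proof
    assume "gp p q B1 B2 = gp p q B2 B1" then show ?thesis by simp
  next
    assume h: "gp p q B1 B2 = smul (- 1) (gp p q B2 B1)"
    then show ?thesis by (simp add: gp_smul_left gp_smul_right)
  qed
  have "K p q B1 (K p q B2 X) = smul (1/c1 * (1/c2)) (gp p q (gp p q (gp p q B1 B2) X) (gp p q B2 B1))"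
    by (simp add: K_form[OF m1 c1] K_form[OF m2 c2] gp_smul_left gp_smul_right smul_smul gp_assoc)
  also have "\<dots> = smul (1/c2 * (1/c1)) (gp p q (gp p q (gp p q B2 B1) X) (gp p q B1 B2))"
    using key by (simp add: mult.commute)
  also have "\<dots> = K p q B2 (K p q B1 X)"
    by (simp add: K_form[OF m1 c1] K_form[OF m2 c2] gp_smul_left gp_smul_right smul_smul gp_assoc)
  finally show ?thesis .
qed

lemma foldr_push:
  assumes "\<forall>g\<in>set fs. \<forall>X. f (g X) = g (f X)"
  shows "foldr (\<lambda>f X. f X) fs (f A) = f (foldr (\<lambda>f X. f X) fs A)"
  using assms by (induction fs) auto

lemma fold_comm:
  assumes "\<forall>f\<in>set fs. \<forall>g\<in>set fs. \<forall>X. f (g X) = g (f X)"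
  shows "foldl (\<lambda>X f. f X) A fs = foldr (\<lambda>f X. f X) fs A"
  using assms
proof (induction fs arbitrary: A)
  case Nil then show ?case by simp
next
  case (Cons f fs)
  have "foldl (\<lambda>X f. f X) A (f # fs) = foldl (\<lambda>X f. f X) (f A) fs" by simp
  also have "\<dots> = foldr (\<lambda>f X. f X) fs (f A)" using Cons by simp
  also have "\<dots> = f (foldr (\<lambda>f X. f X) fs A)"
    by (rule foldr_push) (use Cons.prems in auto)
  finally show ?case by simp
qed



theorem corollary3p5:
  fixes p q :: nat and A :: mvec and Bs :: "mvec list" and js :: "nat list"
  assumes "mv p q A"
    and "\<forall>k < length Bs. is_blade p q (Bs ! k)"
    and "\<forall>k < length Bs. \<forall>l < length Bs. k \<noteq> l \<longrightarrow> coorthogonal p q (Bs ! k) (Bs ! l)"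
    and "\<forall>k < length Bs. \<exists>c::real. c \<noteq> 0 \<and> gp p q (Bs ! k) (Bs ! k) = scal c"
    and "length js = length Bs"
    and "set js \<subseteq> {0, 1}"
  shows "cproj_fwd p q js Bs A = cproj_bwd p q js Bs A"
proof -
  let ?fs = "map (\<lambda>(B,j). cproj p q j B) (zip Bs js)"
  have fwd: "cproj_fwd p q js Bs A = foldl (\<lambda>X f. f X) A ?fs"
    by (simp add: cproj_fwd_def foldl_map split_def)
  have bwd: "cproj_bwd p q js Bs A = foldr (\<lambda>f X. f X) ?fs A"
    by (simp add: cproj_bwd_def foldr_map split_def o_def)
  have cm: "\<forall>f\<in>set ?fs. \<forall>g\<in>set ?fs. \<forall>X. f (g X) = g (f X)"
  proof (intro ballI allI)
    fix f g X assume f: "f \<in> set ?fs" and g: "g \<in> set ?fs"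
    from f obtain k where k: "k < length Bs" "f = cproj p q (js ! k) (Bs ! k)"
      using assms(5) by (auto simp: set_zip)
    from g obtain l where l: "l < length Bs" "g = cproj p q (js ! l) (Bs ! l)"
      using assms(5) by (auto simp: set_zip)
    show "f (g X) = g (f X)"
    proof (cases "k = l")
      case True then show ?thesis using k l by simp
    next
      case False
      obtain c1 where c1: "c1 \<noteq> 0" "gp p q (Bs ! k) (Bs ! k) = scal c1" using assms(4) k by blast
      obtain c2 where c2: "c2 \<noteq> 0" "gp p q (Bs ! l) (Bs ! l) = scal c2" using assms(4) l by blast
      have m1: "mv p q (Bs ! k)" using assms(2) k blade_mv by blast
      have m2: "mv p q (Bs ! l)" using assms(2) l blade_mv by blast
      have co: "coorthogonal p q (Bs ! k) (Bs ! l)" using assms(3) k l False by blast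
      show ?thesis unfolding k(2) l(2)
        by (rule cproj_comm, rule K_comm[OF m1 c1 m2 c2 co])
    qed
  qed
  show ?thesis unfolding fwd bwd by (rule fold_comm[OF cm])
qed


end
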